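(* Let $\kappa$ be an infinite cardinal and $B_0=\{(X,\,X\cap Z,\,Z): X,Z\in\mathcal{F}(\kappa),\ X\sim Z\}$. Every complemented bounded sublattice $L$ of $S$ with $B_0\subsetneq L$ contains an element $(A,B,C)$ with $B\not\subseteq A$.
   Context: $\mathcal{F}(\kappa)$ is the Boolean lattice of subsets $X\subseteq\kappa$ that are finite or cofinite. For $X,Z\in\mathcal{F}(\kappa)$, $X\sim Z$ means that either both $X,Z$ are finite or both $\kappa\setminus X,\kappa\setminus Z$ are finite. Let $\mu(A,B,C)=(A\cap B)\cup(A\cap C)\cup(B\cap C)$; a triple is balanced if $A\cap B=A\cap C=B\cap C$. $S$ is the set of balanced triples $(A,B,C)\in\mathcal{F}(\kappa)^3$ with $C\setminus\mu(A,B,C)$ finite, ordered componentwise; it is a bounded lattice with componentwise meet, join $(A,B,C)\vee(A',B',C')=(U_1\cup m,U_2\cup m,U_3\cup m)$ where $U_1=A\cup A'$, $U_2=B\cup B'$, $U_3=C\cup C'$, $m=\mu(U_1,U_2,U_3)$, and bounds $(\emptyset,\emptyset,\emptyset)$, $(\kappa,\kappa,\kappa)$. A complemented bounded sublattice is a sublattice containing both bounds in which every element has a complement. (In the paper the set $B_0$ is called $B$.) *)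

theory Defs
  imports Main
begin

text \<open>The cardinal kappa is represented by the universe of an infinite type 'a.\<close>

definition Fk :: "'a set set" where
  "Fk = {X. finite X \<or> finite (- X)}"

definition simF :: "'a set \<Rightarrow> 'a set \<Rightarrow> bool" where
  "simF X Z \<longleftrightarrow> (finite X \<and> finite Z) \<or> (finite (- X) \<and> finite (- Z))"

definition mu :: "'a set \<Rightarrow> 'a set \<Rightarrow> 'a set \<Rightarrow> 'a set" where
  "mu A B C = (A \<inter> B) \<union> (A \<inter> C) \<union> (B \<inter> C)"

definition balanced :: "'a set \<Rightarrow> 'a set \<Rightarrow> 'a set \<Rightarrow> bool" where
  "balanced A B C \<longleftrightarrow> A \<inter> B = A \<inter> C \<and> A \<inter> C = B \<inter> C"

definition S :: "('a set \<times> 'a set \<times> 'a set) set" where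
  "S = {(A, B, C). A \<in> Fk \<and> B \<in> Fk \<and> C \<in> Fk \<and> balanced A B C \<and> finite (C - mu A B C)}"

definition Smeet :: "'a set \<times> 'a set \<times> 'a set \<Rightarrow> 'a set \<times> 'a set \<times> 'a set \<Rightarrow> 'a set \<times> 'a set \<times> 'a set" where
  "Smeet x y = (case x of (A, B, C) \<Rightarrow> case y of (A', B', C') \<Rightarrow> (A \<inter> A', B \<inter> B', C \<inter> C'))"

definition Sjoin :: "'a set \<times> 'a set \<times> 'a set \<Rightarrow> 'a set \<times> 'a set \<times> 'a set \<Rightarrow> 'a set \<times> 'a set \<times> 'a set" where
  "Sjoin x y = (case x of (A, B, C) \<Rightarrow> case y of (A', B', C') \<Rightarrow>
     (let U1 = A \<union> A'; U2 = B \<union> B'; U3 = C \<union> C'; m = mu U1 U2 U3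
      in (U1 \<union> m, U2 \<union> m, U3 \<union> m)))"

definition Sbot :: "'a set \<times> 'a set \<times> 'a set" where
  "Sbot = ({}, {}, {})"

definition Stop :: "'a set \<times> 'a set \<times> 'a set" where
  "Stop = (UNIV, UNIV, UNIV)"

definition complemented_bounded_sublattice :: "('a set \<times> 'a set \<times> 'a set) set \<Rightarrow> bool" where
  "complemented_bounded_sublattice L \<longleftrightarrow>
     L \<subseteq> S \<and> Sbot \<in> L \<and> Stop \<in> L \<and>
     (\<forall>x\<in>L. \<forall>y\<in>L. Smeet x y \<in> L \<and> Sjoin x y \<in> L) \<and>
     (\<forall>x\<in>L. \<exists>y\<in>L. Smeet x y = Sbot \<and> Sjoin x y = Stop)"

definition B0 :: "('a set \<times> 'a set \<times> 'a set) set" where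
  "B0 = {(X, X \<inter> Z, Z) | X Z. X \<in> Fk \<and> Z \<in> Fk \<and> simF X Z}"

end

theory Submission
  imports Defs
begin

theorem corollary5p5:
  fixes L :: "('a set \<times> 'a set \<times> 'a set) set"
  assumes "infinite (UNIV :: 'a set)"
    and "complemented_bounded_sublattice L"
    and "B0 \<subset> L"
  shows "\<exists>(A, B, C)\<in>L. \<not> B \<subseteq> A"
proof (rule ccontr)
  assume H: "\<not> (\<exists>(A, B, C)\<in>L. \<not> B \<subseteq> A)"
  have LS: "L \<subseteq> S" using assms(2) unfolding complemented_bounded_sublattice_def by blast
  have sub: "\<And>A B C. (A,B,C) \<in> L \<Longrightarrow> B = A \<inter> C \<and> finite (C - A) \<and> A \<in> Fk \<and> C \<in> Fk"
  proof -
    fix A B C assume m: "(A,B,C) \<in> L"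
    then have "B \<subseteq> A" using H by blast
    moreover have "(A,B,C) \<in> S" using m LS by blast
    ultimately show "B = A \<inter> C \<and> finite (C - A) \<and> A \<in> Fk \<and> C \<in> Fk"
      unfolding S_def balanced_def mu_def
      by (auto elim!: finite_subset[rotated])
  qed
  obtain x where xL: "x \<in> L" and xB: "x \<notin> B0" using assms(3) by blast
  obtain A B C where x: "x = (A,B,C)" by (cases x) auto
  have s: "B = A \<inter> C" "finite (C - A)" "A \<in> Fk" "C \<in> Fk" using sub xL x by auto
  have ns: "\<not> simF A C" using xB s unfolding x B0_def by blast
  have fin: "\<And>X :: 'a set. finite X \<Longrightarrow> finite (- X) \<Longrightarrow> False"
    proof -
    fix X :: "'a set" assume "finite X" "finite (- X)"
    then have "finite (X \<union> - X)" by blast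
    then show False using assms(1) by simp
  qed
  have Cfin: "finite C" and Acof: "finite (- A)"
  proof -
    have "C \<subseteq> (C - A) \<union> A" by blast
    then have "finite A \<Longrightarrow> finite C" using s(2) finite_subset by blast
    then have "\<not> finite A" using ns s(4) fin unfolding Fk_def simF_def by blast
    then show "finite (- A)" using s(3) unfolding Fk_def by blast
    then show "finite C" using ns s(4) unfolding Fk_def simF_def by blast
  qed
  obtain y where yL: "y \<in> L" and my: "Smeet x y = Sbot" and jy: "Sjoin x y = Stop"
    using assms(2) xL unfolding complemented_bounded_sublattice_def by blast
  obtain A' B' C' where y: "y = (A',B',C')" by (cases y) auto
  have s': "B' = A' \<inter> C'" "finite (C' - A')" using sub yL y by auto
  have "A \<inter> A' = {}" using my unfolding x y Smeet_def Sbot_def by simp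
  then have "A' \<subseteq> - A" by blast
  then have "finite A'" using Acof finite_subset by blast
  then have C'fin: "finite C'" using s'(2)
    by (metis Diff_partition finite_Diff2 finite_Un Un_Diff_cancel2 finite_subset Un_upper2 sup_commute)
  have "C \<union> C' \<union> mu (A \<union> A') (B \<union> B') (C \<union> C') = UNIV"
    using jy unfolding x y Sjoin_def Stop_def Let_def by simp
  moreover have "C \<union> C' \<union> mu (A \<union> A') (B \<union> B') (C \<union> C') \<subseteq> C \<union> C'"
    using s(1) s'(1) unfolding mu_def by blast
  ultimately have "UNIV \<subseteq> C \<union> C'" by simp
  then show False using assms(1) Cfin C'fin finite_subset by blast
qed

end
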